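(* Let $n\ge2$, $q=2^m$, and let $\mathbf{H}_X^{(q)}$ be a $q$-ary labeling of the toric Tanner graph $\mathcal{G}_X$ (as defined in the context) with code $\mathcal{C}_X^{(q)}$. If every cycle of the labeled graph $\mathcal{G}_X$ has product $1$, then $\dim_{\mathbb{F}_q}\mathcal{C}_X^{(q)}=n^2+1$.
   Context: Indices are taken in $\mathbb{Z}_{2n}=\{0,\dots,2n-1\}$ with arithmetic mod $2n$. Variable nodes: $V=\{(i,j)\in\mathbb{Z}_{2n}^2: i+j\text{ even}\}$ ($2n^2$ nodes). $X$-check nodes: $C_X=\{(i,j): i\text{ odd}, j\text{ even}\}$ ($n^2$ nodes). Each check node $(i,j)$ is adjacent to the four variable nodes $(i\pm1,j)$, $(i,j\pm1)$; $\mathcal{G}_X$ is the resulting bipartite graph on $V\cup C_X$. A $q$-ary labeling is a matrix $\mathbf{H}_X^{(q)}=(x_{c,v})\in\mathbb{F}_q^{C_X\times V}$ with $x_{c,v}\neq0$ iff $c$ and $v$ are adjacent; the label of edge $(c,v)$ is $x_{c,v}$. $\mathcal{C}_X^{(q)}=\{w\in\mathbb{F}_q^V:\mathbf{H}_X^{(q)}w=0\}$. For a cycle $v_1,c_1,v_2,\dots,v_k,c_k,v_1$ its product is $\prod_{t=1}^k x_{c_t v_{t+1}}x_{c_t v_t}^{-1}$ (indices of $v$ mod $k$). *)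

theory Defs
  imports Complex_Main "HOL-Library.Function_Algebras"
begin

text \<open>Toric Tanner graph G_X. Nodes are pairs (i,j) of naturals with i,j < 2n,
  representing elements of Z_2n x Z_2n; arithmetic is taken mod 2n.\<close>

definition var_nodes :: "nat \<Rightarrow> (nat \<times> nat) set" where
  "var_nodes n = {(i,j). i < 2*n \<and> j < 2*n \<and> even (i+j)}"

definition xcheck_nodes :: "nat \<Rightarrow> (nat \<times> nat) set" where
  "xcheck_nodes n = {(i,j). i < 2*n \<and> j < 2*n \<and> odd i \<and> even j}"

definition nbrs :: "nat \<Rightarrow> nat \<times> nat \<Rightarrow> (nat \<times> nat) set" where
  "nbrs n c = (case c of (i,j) \<Rightarrow>
     {((i+1) mod (2*n), j), ((i + 2*n - 1) mod (2*n), j),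
      (i, (j+1) mod (2*n)), (i, (j + 2*n - 1) mod (2*n))})"

definition adjX :: "nat \<Rightarrow> nat \<times> nat \<Rightarrow> nat \<times> nat \<Rightarrow> bool" where
  "adjX n c v \<longleftrightarrow> c \<in> xcheck_nodes n \<and> v \<in> var_nodes n \<and> v \<in> nbrs n c"

definition is_labeling :: "nat \<Rightarrow> (nat \<times> nat \<Rightarrow> nat \<times> nat \<Rightarrow> 'a::field) \<Rightarrow> bool" where
  "is_labeling n x \<longleftrightarrow>
     (\<forall>c \<in> xcheck_nodes n. \<forall>v \<in> var_nodes n. x c v \<noteq> 0 \<longleftrightarrow> adjX n c v)"

definition codeX :: "nat \<Rightarrow> (nat \<times> nat \<Rightarrow> nat \<times> nat \<Rightarrow> 'a::field) \<Rightarrow> (nat \<times> nat \<Rightarrow> 'a) set" where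
  "codeX n x = {w. (\<forall>v. v \<notin> var_nodes n \<longrightarrow> w v = 0) \<and>
                   (\<forall>c \<in> xcheck_nodes n. (\<Sum>v \<in> var_nodes n. x c v * w v) = 0)}"

text \<open>A cycle v_1,c_1,v_2,...,v_k,c_k,v_1 of G_X (lists vs, cs of length k), with
  distinct vertices; c_t is adjacent to v_t and v_(t+1), indices mod k.\<close>
definition is_cycleX :: "nat \<Rightarrow> (nat \<times> nat) list \<Rightarrow> (nat \<times> nat) list \<Rightarrow> bool" where
  "is_cycleX n vs cs \<longleftrightarrow> length vs = length cs \<and> length vs \<ge> 2 \<and>
     distinct vs \<and> distinct cs \<and>
     (\<forall>t < length vs. adjX n (cs!t) (vs!t) \<and> adjX n (cs!t) (vs!((t+1) mod length vs)))"

definition cycle_product :: "(nat \<times> nat \<Rightarrow> nat \<times> nat \<Rightarrow> 'a::field) \<Rightarrow>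
    (nat \<times> nat) list \<Rightarrow> (nat \<times> nat) list \<Rightarrow> 'a" where
  "cycle_product x vs cs =
     (\<Prod>t < length vs. x (cs!t) (vs!((t+1) mod length vs)) * inverse (x (cs!t) (vs!t)))"

definition fdim :: "('b \<Rightarrow> 'a::field) set \<Rightarrow> nat" where
  "fdim S = vector_space.dim (\<lambda>(c::'a) f. (\<lambda>v. c * f v)) S"

end

theory Submission
  imports Defs "HOL-Number_Theory.Residues"
begin

interpretation fv: vector_space "(\<lambda>c f v. c * f v) :: 'a::field \<Rightarrow> ('b \<Rightarrow> 'a) \<Rightarrow> 'b \<Rightarrow> 'a"
  by unfold_locales (auto simp: algebra_simps fun_eq_iff)

lemma sum_fun_apply: "(sum f A) x = (\<Sum>a\<in>A. f a x)"
  by (induction A rule: infinite_finite_induct) auto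

lemma fdim_eq: "fdim S = fv.dim S"
  by (simp add: fdim_def)

lemma indep_card_le_dim:
  fixes B S W :: "('b \<Rightarrow> 'a::field) set"
  assumes "fv.independent B" "B \<subseteq> S" "S \<subseteq> fv.span W" "finite W"
  shows "card B \<le> fv.dim S"
proof -
  obtain A where A: "A \<subseteq> S" "fv.independent A" "S \<subseteq> fv.span A" "card A = fv.dim S"
    using fv.basis_exists by blast
  have "A \<subseteq> fv.span W" using A assms by blast
  then have "finite A" using fv.independent_span_bound[OF assms(4) A(2)] by blast
  have "B \<subseteq> fv.span A" using A assms by blast
  then show ?thesis using fv.independent_span_bound[OF \<open>finite A\<close> assms(1)] A by simp
qed

lemma dim_zero:
  fixes S :: "('b \<Rightarrow> 'a::field) set"
  assumes "S \<subseteq> {0}" shows "fv.dim S = 0"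
  using fv.dim_le_card[of S "{}"] assms by simp

lemma hyper:
  fixes S W :: "('b \<Rightarrow> 'a::field) set" and \<phi> :: "('b \<Rightarrow> 'a) \<Rightarrow> 'a"
  assumes sub: "fv.subspace S" and SW: "S \<subseteq> fv.span W" and fW: "finite W"
   and add: "\<And>f g. \<phi> (f + g) = \<phi> f + \<phi> g" and scl: "\<And>c f. \<phi> (\<lambda>v. c * f v) = c * \<phi> f"
  shows "fv.dim S \<le> fv.dim (S \<inter> {f. \<phi> f = 0}) + 1"
proof (cases "S \<subseteq> {f. \<phi> f = 0}")
  case True
  then have "S \<inter> {f. \<phi> f = 0} = S" by blast
  then show ?thesis by simp
next
  case False
  then obtain b0 where b0: "b0 \<in> S" "\<phi> b0 \<noteq> 0" by blast
  obtain B where B: "B \<subseteq> S \<inter> {f. \<phi> f = 0}" "fv.independent B"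
     "S \<inter> {f. \<phi> f = 0} \<subseteq> fv.span B" "card B = fv.dim (S \<inter> {f. \<phi> f = 0})"
    using fv.basis_exists by blast
  have "B \<subseteq> fv.span W" using B SW by blast
  then have fB: "finite B" using fv.independent_span_bound[OF fW B(2)] by blast
  have "S \<subseteq> fv.span (insert b0 B)"
  proof
    fix s assume s: "s \<in> S"
    define k where "k = \<phi> s / \<phi> b0"
    define r where "r = s + (\<lambda>v. (- k) * b0 v)"
    have "(\<lambda>v. (- k) * b0 v) \<in> S" using sub b0 unfolding fv.subspace_def by blast
    then have rS: "r \<in> S" using sub s unfolding fv.subspace_def r_def by blast
    have "\<phi> r = \<phi> s - k * \<phi> b0" unfolding r_def add scl[of "-k" b0] by simp
    also have "\<dots> = 0" using b0 by (simp add: k_def)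
    finally have "r \<in> fv.span B" using rS B by blast
    then have "r \<in> fv.span (insert b0 B)" using fv.span_mono[of B "insert b0 B"] by blast
    moreover have "(\<lambda>v. k * b0 v) \<in> fv.span (insert b0 B)"
      by (rule fv.span_scale[where x=b0]) (simp add: fv.span_base)
    ultimately have "r + (\<lambda>v. k * b0 v) \<in> fv.span (insert b0 B)" by (rule fv.span_add)
    moreover have "r + (\<lambda>v. k * b0 v) = s" by (simp add: r_def fun_eq_iff algebra_simps)
    ultimately show "s \<in> fv.span (insert b0 B)" by simp
  qed
  then have "fv.dim S \<le> card (insert b0 B)" using fv.dim_le_card fB by blast
  also have "\<dots> \<le> card B + 1" using fB by (simp add: card_insert_if)
  finally show ?thesis using B by simp
qed

lemma phi_zero:
  fixes \<phi> :: "('b \<Rightarrow> 'a::field) \<Rightarrow> 'a"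
  assumes "\<And>f g. \<phi> (f + g) = \<phi> f + (\<phi> g :: 'a::field)"
  shows "\<phi> 0 = 0"
proof -
  have "\<phi> 0 = \<phi> 0 + \<phi> 0" using assms[of 0 0] by (simp only: add_0_left)
  from this[symmetric] show ?thesis by (simp only: add_cancel_left_right)
qed

lemma hyper_iter:
  fixes S W :: "('b \<Rightarrow> 'a::field) set" and \<phi> :: "'i \<Rightarrow> ('b \<Rightarrow> 'a) \<Rightarrow> 'a"
  assumes fI: "finite I" and sub: "fv.subspace S" and SW: "S \<subseteq> fv.span W" and fW: "finite W"
   and padd: "\<And>i f g. i \<in> I \<Longrightarrow> \<phi> i (f + g) = \<phi> i f + \<phi> i g"
   and pscl: "\<And>i c f. i \<in> I \<Longrightarrow> \<phi> i (\<lambda>v. c * f v) = c * \<phi> i f"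
  shows "fv.dim S \<le> fv.dim (S \<inter> {f. \<forall>i\<in>I. \<phi> i f = 0}) + card I"
  using fI padd pscl
proof (induction I rule: finite_induct)
  case empty
  then show ?case by simp
next
  case (insert j I)
  let ?S = "S \<inter> {f. \<forall>i\<in>I. \<phi> i f = 0}"
  have S0: "0 \<in> S" and Sadd: "\<And>x y. x \<in> S \<Longrightarrow> y \<in> S \<Longrightarrow> x + y \<in> S"
    and Sscl: "\<And>c x. x \<in> S \<Longrightarrow> (\<lambda>v. c * x v) \<in> S"
    using sub unfolding fv.subspace_def by auto
  have subS: "fv.subspace ?S"
  proof (rule fv.subspaceI)
    have "\<phi> i 0 = 0" if "i \<in> I" for i
    proof (rule phi_zero)
      show "\<phi> i (f + g) = \<phi> i f + \<phi> i g" for f g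
        by (rule insert.prems(1)) (use that in simp)
    qed
    then show "0 \<in> ?S" using S0 by simp
    show "x + y \<in> ?S" if "x \<in> ?S" "y \<in> ?S" for x y
    proof -
      have "\<phi> i (x + y) = 0" if "i \<in> I" for i
      proof -
        have "\<phi> i (x + y) = \<phi> i x + \<phi> i y"
          by (rule insert.prems(1)) (use that in simp)
        then show ?thesis using that \<open>x \<in> ?S\<close> \<open>y \<in> ?S\<close> by simp
      qed
      then show ?thesis using that Sadd by simp
    qed
    show "(\<lambda>v. c * x v) \<in> ?S" if "x \<in> ?S" for c x
    proof -
      have "\<phi> i (\<lambda>v. c * x v) = 0" if "i \<in> I" for i
      proof -
        have "\<phi> i (\<lambda>v. c * x v) = c * \<phi> i x"
          by (rule insert.prems(2)) (use that in simp)
        then show ?thesis using that \<open>x \<in> ?S\<close> by simp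
      qed
      then show ?thesis using that Sscl by simp
    qed
  qed
  have "?S \<subseteq> fv.span W" using SW by blast
  from hyper[OF subS this fW, of "\<phi> j"] insert.prems
  have "fv.dim ?S \<le> fv.dim (?S \<inter> {f. \<phi> j f = 0}) + 1" by simp
  moreover have "?S \<inter> {f. \<phi> j f = 0} = S \<inter> {f. \<forall>i\<in>insert j I. \<phi> i f = 0}" by auto
  moreover have "fv.dim S \<le> fv.dim ?S + card I" using insert by simp
  ultimately show ?case using insert by simp
qed


definition chk :: "nat \<Rightarrow> nat \<Rightarrow> nat \<times> nat" where "chk a b = (2*a+1, 2*b)"
definition hv :: "nat \<Rightarrow> nat \<Rightarrow> nat \<times> nat" where "hv a b = (2*a+1, 2*b+1)"
definition vv :: "nat \<Rightarrow> nat \<Rightarrow> nat \<Rightarrow> nat \<times> nat" where "vv n a b = ((2*a+2) mod (2*n), 2*b)"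
definition sucn :: "nat \<Rightarrow> nat \<Rightarrow> nat" where "sucn n a = (a+1) mod n"
definition pren :: "nat \<Rightarrow> nat \<Rightarrow> nat" where "pren n a = (a+n-1) mod n"

lemma pren_alt: "a < n \<Longrightarrow> pren n a = (if a = 0 then n - 1 else a - 1)"
proof (cases "a = 0")
  case False
  assume "a < n"
  have e: "a + n - 1 = (a - 1) + n" using False by simp
  show ?thesis unfolding pren_def e mod_add_self2 using False \<open>a < n\<close> by simp
qed (simp add: pren_def)

lemma sucn_alt: "a < n \<Longrightarrow> sucn n a = (if a + 1 = n then 0 else a + 1)"
  by (auto simp: sucn_def)

lemma sucn_lt: "0 < n \<Longrightarrow> sucn n a < n" by (simp add: sucn_def)
lemma pren_lt: "0 < n \<Longrightarrow> pren n a < n" by (simp add: pren_def)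
lemma pren_sucn: "a < n \<Longrightarrow> pren n (sucn n a) = a"
  by (simp add: pren_alt sucn_alt sucn_lt) (auto simp: sucn_alt pren_alt)
lemma sucn_pren: "a < n \<Longrightarrow> sucn n (pren n a) = a"
  by (auto simp: pren_alt sucn_alt)
lemma sucn_neq: "2 \<le> n \<Longrightarrow> a < n \<Longrightarrow> sucn n a \<noteq> a"
  by (auto simp: sucn_alt)
lemma pren_neq: "2 \<le> n \<Longrightarrow> a < n \<Longrightarrow> pren n a \<noteq> a"
  by (auto simp: pren_alt)

lemma bij_sucn: "0 < n \<Longrightarrow> bij_betw (sucn n) {..<n} {..<n}"
  by (rule bij_betw_byWitness[where f'="pren n"]) (auto simp: pren_sucn sucn_pren sucn_lt pren_lt)

lemma sum_sucn: "0 < n \<Longrightarrow> (\<Sum>a<n. f (sucn n a)) = (\<Sum>a<n. f a)"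
  using sum.reindex_bij_betw[OF bij_sucn] by blast
lemma prod_sucn: "0 < n \<Longrightarrow> (\<Prod>a<n. f (sucn n a)) = (\<Prod>a<n. f a)"
  using prod.reindex_bij_betw[OF bij_sucn] by blast

lemma vv_alt: "a < n \<Longrightarrow> vv n a b = (if a + 1 = n then 0 else 2*a+2, 2*b)"
  by (auto simp: vv_def)

lemma nbrs_chk:
  assumes "2 \<le> n" "a < n" "b < n"
  shows "nbrs n (chk a b) = {vv n a b, vv n (pren n a) b, hv a b, hv a (pren n b)}"
proof -
  have 1: "(2*a+1 + 2*n - 1) mod (2*n) = 2*a" using assms by simp
  have 2: "(2*b+1) mod (2*n) = 2*b+1" using assms by simp
  have 3: "(2*b + 2*n - 1) mod (2*n) = 2 * pren n b + 1"
  proof (cases "b = 0")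
    case True then show ?thesis using assms by (simp add: pren_alt)
  next
    case False
    have e: "2*b + 2*n - 1 = (2*b - 1) + 2*n" using False by simp
    show ?thesis unfolding e mod_add_self2 using assms False by (simp add: pren_alt)
  qed
  have 4: "vv n (pren n a) b = (2*a, 2*b)"
    using assms by (auto simp: vv_alt pren_alt pren_lt)
  show ?thesis unfolding nbrs_def chk_def using 1 2 3 4 by (simp add: hv_def vv_def insert_commute)
qed

lemma vv_pren: "2 \<le> n \<Longrightarrow> a < n \<Longrightarrow> vv n (pren n a) b = (2*a, 2*b)"
  by (auto simp: vv_alt pren_alt pren_lt)

lemma chk_in_C: "a < n \<Longrightarrow> b < n \<Longrightarrow> chk a b \<in> xcheck_nodes n"
  by (simp add: chk_def xcheck_nodes_def)
lemma hv_in_V: "a < n \<Longrightarrow> b < n \<Longrightarrow> hv a b \<in> var_nodes n"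
  by (simp add: hv_def var_nodes_def)
lemma vv_in_V: "a < n \<Longrightarrow> b < n \<Longrightarrow> vv n a b \<in> var_nodes n"
  by (simp add: vv_alt var_nodes_def)

lemma C_cases: "c \<in> xcheck_nodes n \<Longrightarrow> \<exists>a<n. \<exists>b<n. c = chk a b"
proof -
  assume c: "c \<in> xcheck_nodes n"
  obtain i j where ij: "c = (i,j)" by (cases c)
  have "i div 2 < n" "j div 2 < n" "c = chk (i div 2) (j div 2)"
    using c ij by (auto simp: xcheck_nodes_def chk_def)
  then show ?thesis by blast
qed

lemma V_cases:
  assumes "2 \<le> n" "v \<in> var_nodes n"
  shows "(\<exists>a<n. \<exists>b<n. v = hv a b) \<or> (\<exists>a<n. \<exists>b<n. v = vv n a b)"
proof -
  obtain i j where ij: "v = (i,j)" by (cases v)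
  show ?thesis
  proof (cases "odd i")
    case True
    then have "i div 2 < n" "j div 2 < n" "v = hv (i div 2) (j div 2)"
      using assms ij by (auto simp: var_nodes_def hv_def)
    then show ?thesis by blast
  next
    case False
    then have "i div 2 < n" "j div 2 < n" "v = (2 * (i div 2), 2 * (j div 2))"
      using assms ij by (auto simp: var_nodes_def)
    then have "pren n (i div 2) < n" "j div 2 < n" "v = vv n (pren n (i div 2)) (j div 2)"
      using assms vv_pren by (auto simp: pren_lt)
    then show ?thesis by blast
  qed
qed

lemma chk_inj: "chk a b = chk a' b' \<longleftrightarrow> a = a' \<and> b = b'"
  by (auto simp: chk_def)
lemma hv_inj: "hv a b = hv a' b' \<longleftrightarrow> a = a' \<and> b = b'"
  by (auto simp: hv_def)
lemma hv_neq_vv: "hv a b \<noteq> vv n a' b'"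
proof
  assume "hv a b = vv n a' b'"
  then have "2*b+1 = 2*b'" by (simp add: hv_def vv_def)
  then show False by presburger
qed
lemma vv_inj: "a < n \<Longrightarrow> a' < n \<Longrightarrow> vv n a b = vv n a' b' \<longleftrightarrow> a = a' \<and> b = b'"
  by (auto simp: vv_alt split: if_splits)

lemma adj_chk:
  assumes "2 \<le> n" "a < n" "b < n"
  shows "adjX n (chk a b) v \<longleftrightarrow> v \<in> {vv n a b, vv n (pren n a) b, hv a b, hv a (pren n b)}"
  using assms by (auto simp: adjX_def nbrs_chk chk_in_C hv_in_V vv_in_V pren_lt)

lemma nz_chk:
  assumes "2 \<le> n" "a < n" "b < n" "is_labeling n x"
    "v \<in> {vv n a b, vv n (pren n a) b, hv a b, hv a (pren n b)}"
  shows "x (chk a b) v \<noteq> 0"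
proof -
  have "adjX n (chk a b) v" using adj_chk assms by blast
  then show ?thesis using assms(4) by (auto simp: is_labeling_def adjX_def)
qed

lemma K:
  assumes n: "2 \<le> n" "a < n" "b < n" and lab: "is_labeling n x"
  shows "(\<Sum>v\<in>var_nodes n. x (chk a b) v * w v) =
     x (chk a b) (vv n a b) * w (vv n a b) + x (chk a b) (vv n (pren n a) b) * w (vv n (pren n a) b)
   + x (chk a b) (hv a b) * w (hv a b) + x (chk a b) (hv a (pren n b)) * w (hv a (pren n b))"
proof -
  let ?N = "{vv n a b, vv n (pren n a) b, hv a b, hv a (pren n b)}"
  have fin: "finite (var_nodes n)"
    by (rule finite_subset[of _ "{..<2*n} \<times> {..<2*n}"]) (auto simp: var_nodes_def)
  have sub: "?N \<subseteq> var_nodes n" using n by (auto simp: hv_in_V vv_in_V pren_lt)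
  have z: "\<forall>v\<in>var_nodes n - ?N. x (chk a b) v * w v = 0"
  proof
    fix v assume v: "v \<in> var_nodes n - ?N"
    then have "\<not> adjX n (chk a b) v" using adj_chk[OF n] by blast
    then have "x (chk a b) v = 0" using lab v chk_in_C[OF n(2,3)] by (auto simp: is_labeling_def)
    then show "x (chk a b) v * w v = 0" by simp
  qed
  have "(\<Sum>v\<in>var_nodes n. x (chk a b) v * w v) = (\<Sum>v\<in>?N. x (chk a b) v * w v)"
    by (rule sum.mono_neutral_right[OF fin sub z])
  also have "\<dots> = x (chk a b) (vv n a b) * w (vv n a b) + x (chk a b) (vv n (pren n a) b) * w (vv n (pren n a) b)
   + x (chk a b) (hv a b) * w (hv a b) + x (chk a b) (hv a (pren n b)) * w (hv a (pren n b))"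
    using n pren_neq[OF n(1), of a] pren_neq[OF n(1), of b]
    by (simp add: hv_inj vv_inj hv_neq_vv hv_neq_vv[symmetric] pren_lt algebra_simps)
  finally show ?thesis .
qed

lemma code_eq:
  assumes n: "2 \<le> n" "a < n" "b < n" and lab: "is_labeling n x" and w: "w \<in> codeX n x"
  shows "x (chk a b) (vv n a b) * w (vv n a b) + x (chk a b) (vv n (pren n a) b) * w (vv n (pren n a) b)
   + x (chk a b) (hv a b) * w (hv a b) + x (chk a b) (hv a (pren n b)) * w (hv a (pren n b)) = 0"
  using K[OF n lab, of w] w chk_in_C[OF n(2,3)] by (simp add: codeX_def)

lemma G1:
  assumes n2: "2 \<le> n" and lab: "is_labeling n x" and w: "w \<in> codeX n x"
   and T1: "\<And>a. a < n \<Longrightarrow> w (hv a (n-1)) = 0"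
   and T2: "\<And>a b. a < n \<Longrightarrow> 1 \<le> b \<Longrightarrow> b < n \<Longrightarrow> w (vv n a b) = 0"
   and T3: "w (vv n (n-1) 0) = 0"
  shows "w = 0"
proof -
  have nz: "\<And>a b v. a < n \<Longrightarrow> b < n \<Longrightarrow> v \<in> {vv n a b, vv n (pren n a) b, hv a b, hv a (pren n b)}
     \<Longrightarrow> x (chk a b) v \<noteq> 0"
    using nz_chk[OF n2 _ _ lab] by blast
  have row: "w (hv a (n-1-k)) = 0" if "a < n" "k < n" for a k
    using that(2)
  proof (induction k)
    case 0 then show ?case using T1 that by simp
  next
    case (Suc k)
    define b where "b = n - 1 - k"
    have b: "1 \<le> b" "b < n" "pren n b = n - 1 - Suc k" using Suc.prems by (auto simp: b_def pren_alt)
    have e: "x (chk a b) (vv n a b) * w (vv n a b) + x (chk a b) (vv n (pren n a) b) * w (vv n (pren n a) b)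
      + x (chk a b) (hv a b) * w (hv a b) + x (chk a b) (hv a (pren n b)) * w (hv a (pren n b)) = 0"
      by (rule code_eq[OF n2 that(1) b(2) lab w])
    have "w (vv n a b) = 0" using T2 that b by simp
    moreover have "w (vv n (pren n a) b) = 0" using T2 that b by (simp add: pren_lt)
    moreover have "w (hv a b) = 0" using Suc b_def by simp
    ultimately have "x (chk a b) (hv a (pren n b)) * w (hv a (pren n b)) = 0" using e by simp
    moreover have "x (chk a b) (hv a (pren n b)) \<noteq> 0" using nz that b by simp
    ultimately show ?case using b by simp
  qed
  have hz: "w (hv a b) = 0" if "a < n" "b < n" for a b
    using row[OF that(1), of "n - 1 - b"] that by simp
  have col: "w (vv n a 0) = 0" if "a < n - 1" for a
    using that
  proof (induction a)
    case 0
    have p: "pren n 0 = n - 1" using n2 by (simp add: pren_alt)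
    have "x (chk 0 0) (vv n 0 0) * w (vv n 0 0) = 0"
      using code_eq[OF n2 _ _ lab w, of 0 0] n2 hz p T3 by simp
    moreover have "x (chk 0 0) (vv n 0 0) \<noteq> 0" using nz n2 by simp
    ultimately show ?case by simp
  next
    case (Suc a)
    have p: "pren n (Suc a) = a" using Suc by (simp add: pren_alt)
    have "x (chk (Suc a) 0) (vv n (Suc a) 0) * w (vv n (Suc a) 0) = 0"
      using code_eq[OF n2 _ _ lab w, of "Suc a" 0] Suc n2 hz p by (simp add: pren_lt)
    moreover have "x (chk (Suc a) 0) (vv n (Suc a) 0) \<noteq> 0" using nz Suc by simp
    ultimately show ?case by simp
  qed
  have vz: "w (vv n a b) = 0" if "a < n" "b < n" for a b
  proof (cases "b = 0")
    case True
    then show ?thesis using col T3 that by (cases "a = n - 1") auto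
  next
    case False then show ?thesis using T2 that by simp
  qed
  show "w = 0"
  proof
    fix v
    show "w v = 0 v"
    proof (cases "v \<in> var_nodes n")
      case True
      then show ?thesis using V_cases[OF n2 True] hz vz by auto
    next
      case False
      then show ?thesis using w unfolding codeX_def by (cases v) auto
    qed
  qed
qed

lemma G2:
  fixes x :: "nat \<times> nat \<Rightarrow> nat \<times> nat \<Rightarrow> 'a::field"
  assumes n2: "2 \<le> n" and lab: "is_labeling n x" and ch: "(1::'a) + 1 = 0"
   and GH: "\<And>a b. a < n \<Longrightarrow> b < n \<Longrightarrow>
      g a b * x (chk a b) (hv a b) = g a (sucn n b) * x (chk a (sucn n b)) (hv a b)"
   and GV: "\<And>a b. a < n \<Longrightarrow> b < n \<Longrightarrow>
      g a b * x (chk a b) (vv n a b) = g (sucn n a) b * x (chk (sucn n a) b) (vv n a b)"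
  shows "(\<Sum>a<n. \<Sum>b<n. g a b * (\<Sum>v\<in>var_nodes n. x (chk a b) v * w v)) = 0"
proof -
  have n0: "0 < n" using n2 by simp
  define A1 where "A1 a b = g a b * x (chk a b) (vv n a b) * w (vv n a b)" for a b
  define A2 where "A2 a b = g a b * x (chk a b) (vv n (pren n a) b) * w (vv n (pren n a) b)" for a b
  define A3 where "A3 a b = g a b * x (chk a b) (hv a b) * w (hv a b)" for a b
  define A4 where "A4 a b = g a b * x (chk a b) (hv a (pren n b)) * w (hv a (pren n b))" for a b
  have "(\<Sum>a<n. \<Sum>b<n. g a b * (\<Sum>v\<in>var_nodes n. x (chk a b) v * w v))
      = (\<Sum>a<n. \<Sum>b<n. A1 a b + A2 a b + A3 a b + A4 a b)"
  proof (intro sum.cong refl)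
    fix a b assume ab: "a \<in> {..<n}" "b \<in> {..<n}"
    have k: "(\<Sum>v\<in>var_nodes n. x (chk a b) v * w v) =
     x (chk a b) (vv n a b) * w (vv n a b) + x (chk a b) (vv n (pren n a) b) * w (vv n (pren n a) b)
   + x (chk a b) (hv a b) * w (hv a b) + x (chk a b) (hv a (pren n b)) * w (hv a (pren n b))"
      using ab by (intro K[OF n2 _ _ lab]) auto
    show "g a b * (\<Sum>v\<in>var_nodes n. x (chk a b) v * w v) = A1 a b + A2 a b + A3 a b + A4 a b"
      unfolding k A1_def A2_def A3_def A4_def by (simp add: algebra_simps)
  qed
  also have "\<dots> = (\<Sum>a<n. \<Sum>b<n. A1 a b) + (\<Sum>a<n. \<Sum>b<n. A2 a b) + (\<Sum>a<n. \<Sum>b<n. A3 a b)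
      + (\<Sum>a<n. \<Sum>b<n. A4 a b)"
    by (simp add: sum.distrib)
  also have "(\<Sum>a<n. \<Sum>b<n. A2 a b) = (\<Sum>a<n. \<Sum>b<n. A1 a b)"
  proof -
    have "(\<Sum>a<n. \<Sum>b<n. A2 a b) = (\<Sum>a<n. \<Sum>b<n. A2 (sucn n a) b)"
      using sum_sucn[OF n0, of "\<lambda>a. \<Sum>b<n. A2 a b"] by simp
    also have "\<dots> = (\<Sum>a<n. \<Sum>b<n. A1 a b)"
      by (intro sum.cong refl) (simp add: A1_def A2_def pren_sucn GV)
    finally show ?thesis .
  qed
  also have "(\<Sum>a<n. \<Sum>b<n. A4 a b) = (\<Sum>a<n. \<Sum>b<n. A3 a b)"
  proof (rule sum.cong[OF refl])
    fix a assume a: "a \<in> {..<n}"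
    have "(\<Sum>b<n. A4 a b) = (\<Sum>b<n. A4 a (sucn n b))"
      using sum_sucn[OF n0, of "\<lambda>b. A4 a b"] by simp
    also have "\<dots> = (\<Sum>b<n. A3 a b)"
      using a by (intro sum.cong refl) (simp add: A3_def A4_def pren_sucn GH)
    finally show "(\<Sum>b<n. A4 a b) = (\<Sum>b<n. A3 a b)" .
  qed
  also have "(\<Sum>a<n. \<Sum>b<n. A1 a b) + (\<Sum>a<n. \<Sum>b<n. A1 a b) + (\<Sum>a<n. \<Sum>b<n. A3 a b)
      + (\<Sum>a<n. \<Sum>b<n. A3 a b) = (1 + 1) * ((\<Sum>a<n. \<Sum>b<n. A1 a b) + (\<Sum>a<n. \<Sum>b<n. A3 a b))"
    by (simp add: algebra_simps)
  also have "\<dots> = 0" using ch by simp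
  finally show ?thesis .
qed

lemma nz_chk':
  assumes "2 \<le> n" "a < n" "b < n" "is_labeling n x"
  shows "x (chk a b) (vv n a b) \<noteq> 0" "x (chk a b) (hv a b) \<noteq> 0"
    "x (chk a (sucn n b)) (hv a b) \<noteq> 0" "x (chk (sucn n a) b) (vv n a b) \<noteq> 0"
proof -
  have n0: "0 < n" using assms by simp
  show "x (chk a b) (vv n a b) \<noteq> 0" "x (chk a b) (hv a b) \<noteq> 0"
    using nz_chk[OF assms(1-4)] by auto
  show "x (chk a (sucn n b)) (hv a b) \<noteq> 0"
    using nz_chk[where n=n and a=a and b="sucn n b" and x=x and v="hv a b"] assms
    by (simp add: pren_sucn sucn_lt[OF n0])
  show "x (chk (sucn n a) b) (vv n a b) \<noteq> 0"
    using nz_chk[where n=n and a="sucn n a" and b=b and x=x and v="vv n a b"] assms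
    by (simp add: pren_sucn sucn_lt[OF n0])
qed

lemma all_less_4: "(\<forall>t<(4::nat). P t) \<longleftrightarrow> P 0 \<and> P 1 \<and> P 2 \<and> P 3"
  by (auto simp: less_Suc_eq numeral_eq_Suc)

lemma prod_less_4: "(\<Prod>t<(4::nat). f t) = f 0 * f 1 * f 2 * (f 3 :: 'a::comm_monoid_mult)"
  by (simp add: numeral_eq_Suc lessThan_Suc mult_ac)

lemma face_cycle:
  assumes n2: "2 \<le> n" and a: "a < n" and b: "b < n"
  shows "is_cycleX n [vv n a b, hv a b, vv n a (sucn n b), hv (sucn n a) b]
     [chk a b, chk a (sucn n b), chk (sucn n a) (sucn n b), chk (sucn n a) b]"
proof -
  have n0: "0 < n" using n2 by simp
  note lt = sucn_lt[OF n0]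
  have ne: "sucn n a \<noteq> a" "sucn n b \<noteq> b" using sucn_neq n2 a b by auto
  show ?thesis
    unfolding is_cycleX_def all_less_4
    using a b ne lt n2
    by (auto simp: adj_chk lt pren_sucn hv_inj vv_inj hv_neq_vv hv_neq_vv[symmetric] chk_inj less_Suc_eq)
qed

definition hr :: "nat \<Rightarrow> (nat \<times> nat \<Rightarrow> nat \<times> nat \<Rightarrow> 'a::field) \<Rightarrow> nat \<Rightarrow> nat \<Rightarrow> 'a" where
  "hr n x a b = x (chk a b) (hv a b) * inverse (x (chk a (sucn n b)) (hv a b))"
definition vr :: "nat \<Rightarrow> (nat \<times> nat \<Rightarrow> nat \<times> nat \<Rightarrow> 'a::field) \<Rightarrow> nat \<Rightarrow> nat \<Rightarrow> 'a" where
  "vr n x a b = x (chk a b) (vv n a b) * inverse (x (chk (sucn n a) b) (vv n a b))"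

lemma face_aux:
  fixes p q r s t u v y :: "'a::field"
  assumes "q \<noteq> 0" "s \<noteq> 0" "u \<noteq> 0" "y \<noteq> 0" "v \<noteq> 0" "t \<noteq> 0"
    and "(p * inverse q) * (r * inverse s) * (t * inverse u) * (v * inverse y) = 1"
  shows "(q * inverse v) * (y * inverse t) = (p * inverse s) * (r * inverse u)"
proof -
  have "p * r * t * v = q * s * u * y"
    using assms(7) assms(1-6) by (simp add: field_simps)
  then show ?thesis using assms(1-6) by (simp add: field_simps)
qed

lemma face_rel:
  fixes x :: "nat \<times> nat \<Rightarrow> nat \<times> nat \<Rightarrow> 'a::field"
  assumes n2: "2 \<le> n" and a: "a < n" and b: "b < n" and lab: "is_labeling n x"
    and cyc: "\<forall>vs cs. is_cycleX n vs cs \<longrightarrow> cycle_product x vs cs = 1"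
  shows "vr n x a b * hr n x (sucn n a) b = hr n x a b * vr n x a (sucn n b)"
proof -
  have n0: "0 < n" using n2 by simp
  define a' where "a' = sucn n a"
  define b' where "b' = sucn n b"
  have a': "a' < n" and b': "b' < n" using sucn_lt[OF n0] by (auto simp: a'_def b'_def)
  have P: "cycle_product x [vv n a b, hv a b, vv n a b', hv a' b] [chk a b, chk a b', chk a' b', chk a' b] = 1"
    using cyc face_cycle[OF n2 a b] by (simp add: a'_def b'_def)
  have P': "(x (chk a b) (hv a b) * inverse (x (chk a b) (vv n a b))) *
     (x (chk a b') (vv n a b') * inverse (x (chk a b') (hv a b))) *
     (x (chk a' b') (hv a' b) * inverse (x (chk a' b') (vv n a b'))) *
     (x (chk a' b) (vv n a b) * inverse (x (chk a' b) (hv a' b))) = 1"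
  proof -
    have L: "length [vv n a b, hv a b, vv n a b', hv a' b] = 4" by simp
    show ?thesis using P unfolding cycle_product_def L prod_less_4 by simp
  qed
  have z1: "x (chk a b) (vv n a b) \<noteq> 0" using nz_chk'[OF n2 a b lab] by simp
  have z2: "x (chk a b') (hv a b) \<noteq> 0" using nz_chk'[OF n2 a b lab] by (simp add: b'_def)
  have z3: "x (chk a' b') (vv n a b') \<noteq> 0" using nz_chk'[OF n2 a b' lab] by (simp add: a'_def)
  have z4: "x (chk a' b) (hv a' b) \<noteq> 0" using nz_chk'[OF n2 a' b lab] by simp
  have z5: "x (chk a' b') (hv a' b) \<noteq> 0" using nz_chk'[OF n2 a' b lab] by (simp add: b'_def)
  have z6: "x (chk a' b) (vv n a b) \<noteq> 0" using nz_chk'[OF n2 a b lab] by (simp add: a'_def)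
  show ?thesis
    unfolding hr_def vr_def a'_def[symmetric] b'_def[symmetric]
    by (rule face_aux[OF z1 z2 z3 z4 z6 z5 P'])
qed

lemma inj_sucn: "0 < n \<Longrightarrow> inj_on (sucn n) {..<n}"
  using bij_sucn bij_betw_def by blast

lemma sucn_Suc: "Suc t mod n = sucn n t" by (simp add: sucn_def)

lemma row_rel:
  fixes x :: "nat \<times> nat \<Rightarrow> nat \<times> nat \<Rightarrow> 'a::field"
  assumes n2: "2 \<le> n" and a: "a < n" and lab: "is_labeling n x"
    and cyc: "\<forall>vs cs. is_cycleX n vs cs \<longrightarrow> cycle_product x vs cs = 1"
  shows "(\<Prod>b<n. hr n x a b) = 1"
proof -
  have n0: "0 < n" using n2 by simp
  define vs where "vs = map (hv a) [0..<n]"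
  define cs where "cs = map (\<lambda>b. chk a (sucn n b)) [0..<n]"
  have inj1: "inj_on (hv a) {0..<n}" by (auto simp: inj_on_def hv_inj)
  have inj2: "inj_on (\<lambda>b. chk a (sucn n b)) {0..<n}"
    using inj_sucn[OF n0] by (auto simp: inj_on_def chk_inj)
  have cyc1: "is_cycleX n vs cs"
    unfolding is_cycleX_def
  proof (intro conjI allI impI)
    show "length vs = length cs" "2 \<le> length vs" by (auto simp: vs_def cs_def n2)
    show "distinct vs" using inj1 by (simp add: vs_def distinct_map)
    show "distinct cs" using inj2 by (simp add: cs_def distinct_map)
    fix t assume t: "t < length vs"
    then have t': "t < n" by (simp add: vs_def)
    have m: "(t + 1) mod length vs = sucn n t" by (simp add: vs_def sucn_def)
    show "adjX n (cs ! t) (vs ! t)"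
      using t' a n2 by (simp add: vs_def cs_def adj_chk sucn_lt pren_sucn)
    show "adjX n (cs ! t) (vs ! ((t + 1) mod length vs))"
      unfolding m using t' a n2 by (simp add: vs_def cs_def adj_chk sucn_lt)
  qed
  have "cycle_product x vs cs =
      (\<Prod>t<n. x (chk a (sucn n t)) (hv a (sucn n t)) * inverse (x (chk a (sucn n t)) (hv a t)))"
    unfolding cycle_product_def
    by (rule prod.cong) (auto simp: vs_def cs_def sucn_Suc sucn_lt n0)
  also have "\<dots> = (\<Prod>t<n. x (chk a (sucn n t)) (hv a (sucn n t))) *
      (\<Prod>t<n. inverse (x (chk a (sucn n t)) (hv a t)))"
    by (rule prod.distrib)
  also have "(\<Prod>t<n. x (chk a (sucn n t)) (hv a (sucn n t))) = (\<Prod>t<n. x (chk a t) (hv a t))"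
    by (rule prod_sucn[OF n0])
  also have "(\<Prod>t<n. x (chk a t) (hv a t)) * (\<Prod>t<n. inverse (x (chk a (sucn n t)) (hv a t)))
      = (\<Prod>b<n. hr n x a b)"
    by (simp add: hr_def prod.distrib)
  finally show ?thesis using cyc cyc1 by simp
qed

lemma col_rel:
  fixes x :: "nat \<times> nat \<Rightarrow> nat \<times> nat \<Rightarrow> 'a::field"
  assumes n2: "2 \<le> n" and lab: "is_labeling n x"
    and cyc: "\<forall>vs cs. is_cycleX n vs cs \<longrightarrow> cycle_product x vs cs = 1"
  shows "(\<Prod>a<n. vr n x a 0) = 1"
proof -
  have n0: "0 < n" using n2 by simp
  define vs where "vs = map (\<lambda>a. vv n a 0) [0..<n]"
  define cs where "cs = map (\<lambda>a. chk (sucn n a) 0) [0..<n]"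
  have inj1: "inj_on (\<lambda>a. vv n a 0) {0..<n}" by (auto simp: inj_on_def vv_inj)
  have inj2: "inj_on (\<lambda>a. chk (sucn n a) 0) {0..<n}"
    using inj_sucn[OF n0] by (auto simp: inj_on_def chk_inj)
  have cyc1: "is_cycleX n vs cs"
    unfolding is_cycleX_def
  proof (intro conjI allI impI)
    show "length vs = length cs" "2 \<le> length vs" by (auto simp: vs_def cs_def n2)
    show "distinct vs" using inj1 by (simp add: vs_def distinct_map)
    show "distinct cs" using inj2 by (simp add: cs_def distinct_map)
    fix t assume t: "t < length vs"
    then have t': "t < n" by (simp add: vs_def)
    have m: "(t + 1) mod length vs = sucn n t" by (simp add: vs_def sucn_def)
    show "adjX n (cs ! t) (vs ! t)"
      using t' n2 by (simp add: vs_def cs_def adj_chk sucn_lt pren_sucn)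
    show "adjX n (cs ! t) (vs ! ((t + 1) mod length vs))"
      unfolding m using t' n2 by (simp add: vs_def cs_def adj_chk sucn_lt)
  qed
  have "cycle_product x vs cs =
      (\<Prod>t<n. x (chk (sucn n t) 0) (vv n (sucn n t) 0) * inverse (x (chk (sucn n t) 0) (vv n t 0)))"
    unfolding cycle_product_def
    by (rule prod.cong) (auto simp: vs_def cs_def sucn_Suc sucn_lt n0)
  also have "\<dots> = (\<Prod>t<n. x (chk (sucn n t) 0) (vv n (sucn n t) 0)) *
      (\<Prod>t<n. inverse (x (chk (sucn n t) 0) (vv n t 0)))"
    by (rule prod.distrib)
  also have "(\<Prod>t<n. x (chk (sucn n t) 0) (vv n (sucn n t) 0)) = (\<Prod>t<n. x (chk t 0) (vv n t 0))"
    by (rule prod_sucn[OF n0])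
  also have "(\<Prod>t<n. x (chk t 0) (vv n t 0)) * (\<Prod>t<n. inverse (x (chk (sucn n t) 0) (vv n t 0)))
      = (\<Prod>a<n. vr n x a 0)"
    by (simp add: vr_def prod.distrib)
  finally show ?thesis using cyc cyc1 by simp
qed

definition gg :: "nat \<Rightarrow> (nat \<times> nat \<Rightarrow> nat \<times> nat \<Rightarrow> 'a::field) \<Rightarrow> nat \<Rightarrow> nat \<Rightarrow> 'a" where
  "gg n x a b = (\<Prod>a'<a. vr n x a' 0) * (\<Prod>b'<b. hr n x a b')"

lemma gauge:
  fixes x :: "nat \<times> nat \<Rightarrow> nat \<times> nat \<Rightarrow> 'a::field"
  assumes n2: "2 \<le> n" and lab: "is_labeling n x"
    and cyc: "\<forall>vs cs. is_cycleX n vs cs \<longrightarrow> cycle_product x vs cs = 1"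
  shows "\<And>a b. a < n \<Longrightarrow> b < n \<Longrightarrow> gg n x a b \<noteq> 0"
    and "\<And>a b. a < n \<Longrightarrow> b < n \<Longrightarrow>
      gg n x a b * x (chk a b) (hv a b) = gg n x a (sucn n b) * x (chk a (sucn n b)) (hv a b)"
    and "\<And>a b. a < n \<Longrightarrow> b < n \<Longrightarrow>
      gg n x a b * x (chk a b) (vv n a b) = gg n x (sucn n a) b * x (chk (sucn n a) b) (vv n a b)"
proof -
  have n0: "0 < n" using n2 by simp
  have hnz: "hr n x a b \<noteq> 0" if "a < n" "b < n" for a b
    using nz_chk'[OF n2 that lab] by (simp add: hr_def)
  have vnz: "vr n x a b \<noteq> 0" if "a < n" "b < n" for a b
    using nz_chk'[OF n2 that lab] by (simp add: vr_def)
  show gnz: "gg n x a b \<noteq> 0" if "a < n" "b < n" for a b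
    using that hnz vnz n0 by (simp add: gg_def prod_zero_iff)
  have F: "vr n x a 0 * (\<Prod>b'<b. hr n x (sucn n a) b') = (\<Prod>b'<b. hr n x a b') * vr n x a b"
    if a: "a < n" and b: "b < n" for a b
    using b
  proof (induction b)
    case 0 then show ?case by simp
  next
    case (Suc b)
    have sb: "sucn n b = Suc b" using Suc.prems by (simp add: sucn_def)
    have fr: "vr n x a b * hr n x (sucn n a) b = hr n x a b * vr n x a (Suc b)"
      using face_rel[OF n2 a _ lab cyc, of b] Suc.prems sb by simp
    have "vr n x a 0 * (\<Prod>b'<Suc b. hr n x (sucn n a) b')
        = (vr n x a 0 * (\<Prod>b'<b. hr n x (sucn n a) b')) * hr n x (sucn n a) b"
      by (simp add: mult_ac)
    also have "\<dots> = (\<Prod>b'<b. hr n x a b') * (vr n x a b * hr n x (sucn n a) b)"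
      using Suc by (simp add: mult_ac)
    also have "\<dots> = (\<Prod>b'<Suc b. hr n x a b') * vr n x a (Suc b)"
      unfolding fr by (simp add: mult_ac)
    finally show ?case .
  qed
  have H: "gg n x a (sucn n b) = gg n x a b * hr n x a b" if a: "a < n" and b: "b < n" for a b
  proof (cases "b + 1 < n")
    case True
    then have "sucn n b = Suc b" by (simp add: sucn_def)
    then show ?thesis by (simp add: gg_def mult_ac)
  next
    case False
    then have e: "Suc b = n" using b by simp
    then have bn: "b = n - 1" "sucn n b = 0" by (auto simp: sucn_def)
    have "(\<Prod>b'<b. hr n x a b') * hr n x a b = (\<Prod>b'<n. hr n x a b')"
      using bn n0 by (metis Suc_pred' prod.lessThan_Suc)
    also have "\<dots> = 1" by (rule row_rel[OF n2 a lab cyc])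
    finally show ?thesis using bn by (simp add: gg_def mult.assoc)
  qed
  have V: "gg n x (sucn n a) b = gg n x a b * vr n x a b" if a: "a < n" and b: "b < n" for a b
  proof (cases "a + 1 < n")
    case True
    then have sa: "sucn n a = Suc a" by (simp add: sucn_def)
    have "gg n x (sucn n a) b = (\<Prod>a'<a. vr n x a' 0) * (vr n x a 0 * (\<Prod>b'<b. hr n x (sucn n a) b'))"
      unfolding gg_def by (simp add: sa mult_ac)
    also have "\<dots> = gg n x a b * vr n x a b"
      unfolding F[OF a b] by (simp add: gg_def mult_ac)
    finally show ?thesis .
  next
    case False
    then have e: "Suc a = n" using a by simp
    then have an: "a = n - 1" "sucn n a = 0" by (auto simp: sucn_def)
    have "gg n x a b * vr n x a b = (\<Prod>a'<a. vr n x a' 0) * ((\<Prod>b'<b. hr n x a b') * vr n x a b)"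
      by (simp add: gg_def mult_ac)
    also have "\<dots> = ((\<Prod>a'<a. vr n x a' 0) * vr n x a 0) * (\<Prod>b'<b. hr n x (sucn n a) b')"
      unfolding F[OF a b, symmetric] by (simp add: mult_ac)
    also have "(\<Prod>a'<a. vr n x a' 0) * vr n x a 0 = (\<Prod>a'<n. vr n x a' 0)"
      using an n0 by (metis Suc_pred' prod.lessThan_Suc)
    also have "\<dots> = 1" by (rule col_rel[OF n2 lab cyc])
    finally show ?thesis using an by (simp add: gg_def)
  qed
  show "gg n x a b * x (chk a b) (hv a b) = gg n x a (sucn n b) * x (chk a (sucn n b)) (hv a b)"
    if a: "a < n" and b: "b < n" for a b
    using H[OF a b] nz_chk'(3)[OF n2 a b lab] by (simp add: hr_def)
  show "gg n x a b * x (chk a b) (vv n a b) = gg n x (sucn n a) b * x (chk (sucn n a) b) (vv n a b)"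
    if a: "a < n" and b: "b < n" for a b
    using V[OF a b] nz_chk'(4)[OF n2 a b lab] by (simp add: vr_def)
qed

lemma char2:
  assumes "card (UNIV :: 'a::{field,finite} set) = 2 ^ m"
  shows "(1::'a) + 1 = 0"
proof -
  have pos: "CHAR('a) > 0" by (rule finite_imp_CHAR_pos) simp
  have pr: "prime CHAR('a)" by (rule prime_CHAR_semidom[OF pos])
  have "CHAR('a) dvd 2 ^ m" using CHAR_dvd_CARD[where 'a='a] assms by simp
  then have "CHAR('a) dvd 2" using prime_dvd_power[OF pr] by blast
  then have "CHAR('a) \<le> 2" by (simp add: dvd_imp_le)
  moreover have "CHAR('a) \<ge> 2" using pr by (simp add: prime_ge_2_nat)
  ultimately have "CHAR('a) = 2" by simp
  then have "(of_nat 2 :: 'a) = 0" by (metis of_nat_CHAR)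
  then show ?thesis by simp
qed

lemma finite_V: "finite (var_nodes n)"
  by (rule finite_subset[of _ "{..<2*n} \<times> {..<2*n}"]) (auto simp: var_nodes_def)
lemma finite_C: "finite (xcheck_nodes n)"
  by (rule finite_subset[of _ "{..<2*n} \<times> {..<2*n}"]) (auto simp: xcheck_nodes_def)

lemma card_C: "card (xcheck_nodes n) \<le> n * n"
proof -
  have "xcheck_nodes n \<subseteq> (\<lambda>(a,b). chk a b) ` ({..<n} \<times> {..<n})"
    using C_cases by fastforce
  then have "card (xcheck_nodes n) \<le> card ((\<lambda>(a,b). chk a b) ` ({..<n} \<times> {..<n}))"
    by (rule card_mono[rotated]) simp
  also have "\<dots> \<le> card ({..<n} \<times> {..<n})" by (rule card_image_le) simp
  finally show ?thesis by (simp add: card_cartesian_product)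
qed

lemma card_V: "n * n + n * n \<le> card (var_nodes n)"
proof -
  let ?A = "{..<n} \<times> {..<n}"
  have i1: "inj_on (\<lambda>(a,b). hv a b) ?A" by (auto simp: inj_on_def hv_inj)
  have i2: "inj_on (\<lambda>(a,b). vv n a b) ?A" by (auto simp: inj_on_def vv_inj)
  have d: "(\<lambda>(a,b). hv a b) ` ?A \<inter> (\<lambda>(a,b). vv n a b) ` ?A = {}" by (auto simp: hv_neq_vv hv_neq_vv[symmetric])
  have sub: "(\<lambda>(a,b). hv a b) ` ?A \<union> (\<lambda>(a,b). vv n a b) ` ?A \<subseteq> var_nodes n"
    by (auto simp: hv_in_V vv_in_V)
  have "card ((\<lambda>(a,b). hv a b) ` ?A \<union> (\<lambda>(a,b). vv n a b) ` ?A) = n * n + n * n"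
    using card_Un_disjoint[OF _ _ d] card_image[OF i1] card_image[OF i2]
    by (simp add: card_cartesian_product)
  then show ?thesis using card_mono[OF finite_V sub] by simp
qed

definition delta :: "'b \<Rightarrow> 'b \<Rightarrow> 'a::field" where "delta v = (\<lambda>u. if u = v then 1 else 0)"

lemma delta_indep:
  "fv.independent ((delta :: 'b \<Rightarrow> 'b \<Rightarrow> 'a::field) ` A)"
proof
  assume "fv.dependent ((delta :: 'b \<Rightarrow> 'b \<Rightarrow> 'a) ` A)"
  then obtain t u f where t: "finite t" "t \<subseteq> (delta :: 'b \<Rightarrow> 'b \<Rightarrow> 'a) ` A"
      "(\<Sum>g\<in>t. (\<lambda>v. u g * g v)) = 0" and f: "f \<in> t" "u f \<noteq> 0"
    unfolding fv.dependent_explicit by blast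
  obtain a where fa: "f = delta a" using t f by blast
  have "(\<Sum>g\<in>t. (\<lambda>v. u g * g v)) a = 0" using t by simp
  then have "(\<Sum>g\<in>t. u g * g a) = 0" by (simp add: sum_fun_apply)
  moreover have "(\<Sum>g\<in>t. u g * g a) = u f"
  proof -
    have "(\<Sum>g\<in>t. u g * g a) = u f * f a + (\<Sum>g\<in>t-{f}. u g * g a)"
      using sum.remove[OF t(1) f(1)] .
    also have "(\<Sum>g\<in>t-{f}. u g * g a) = 0"
    proof (rule sum.neutral, rule ballI)
      fix g assume g: "g \<in> t - {f}"
      then obtain b where gb: "g = delta b" using t by blast
      then have "b \<noteq> a" using g fa by auto
      then show "u g * g a = 0" by (simp add: gb delta_def)
    qed
    finally show ?thesis by (simp add: fa delta_def)
  qed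
  ultimately show False using f by simp
qed

lemma delta_inj: "inj_on (delta :: 'b \<Rightarrow> 'b \<Rightarrow> 'a::field) A"
proof (rule inj_onI)
  fix a b assume "(delta a :: 'b \<Rightarrow> 'a) = delta b"
  then have "(delta a :: 'b \<Rightarrow> 'a) a = delta b a" by simp
  then show "a = b" by (simp add: delta_def split: if_splits)
qed

lemma mult_delta: "x * (if P then 1 else 0) = (if P then x else (0::'a::semiring_1))"
  by simp

lemma U_span:
  assumes "finite V" "\<forall>v. v \<notin> V \<longrightarrow> w v = 0"
  shows "(w :: 'b \<Rightarrow> 'a::field) \<in> fv.span (delta ` V)"
proof -
  have "w = (\<Sum>v\<in>V. (\<lambda>u. w v * delta v u))"
  proof
    fix u
    show "w u = (\<Sum>v\<in>V. (\<lambda>u. w v * delta v u)) u"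
      using assms by (cases "u \<in> V") (auto simp: sum_fun_apply delta_def mult_delta sum.delta')
  qed
  also have "\<dots> \<in> fv.span (delta ` V)"
    by (intro fv.span_sum fv.span_scale fv.span_base) auto
  finally show ?thesis .
qed

theorem lemma4:
  fixes x :: "nat \<times> nat \<Rightarrow> nat \<times> nat \<Rightarrow> 'a::{field,finite}"
    and n m :: nat
  assumes n2: "n \<ge> 2"
    and card: "card (UNIV :: 'a set) = 2 ^ m"
    and lab: "is_labeling n x"
    and cyc: "\<forall>vs cs. is_cycleX n vs cs \<longrightarrow> cycle_product x vs cs = 1"
  shows "fdim (codeX n x) = n^2 + 1"
proof -
  have n0: "0 < n" using n2 by simp
  have ch: "(1::'a) + 1 = 0" by (rule char2[OF card])
  let ?V = "var_nodes n" and ?C = "xcheck_nodes n"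
  let ?W = "(delta :: nat \<times> nat \<Rightarrow> nat \<times> nat \<Rightarrow> 'a) ` ?V"
  define U where "U = {w :: nat \<times> nat \<Rightarrow> 'a. \<forall>v. v \<notin> ?V \<longrightarrow> w v = 0}"
  define phi where "phi c w = (\<Sum>v\<in>?V. x c v * w v)" for c and w :: "nat \<times> nat \<Rightarrow> 'a"
  have finW: "finite ?W" using finite_V by simp
  have USp: "U \<subseteq> fv.span ?W" using U_span[OF finite_V] by (auto simp: U_def)
  have subU: "fv.subspace U" unfolding fv.subspace_def U_def by auto
  have phi_add: "phi c (f + g) = phi c f + phi c g" for c f g
    by (simp add: phi_def sum.distrib algebra_simps)
  have phi_scl: "phi c (\<lambda>v. k * f v) = k * phi c f" for c k f
    by (simp add: phi_def sum_distrib_left algebra_simps)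
  have phi0: "phi c 0 = 0" for c by (simp add: phi_def)
  have code_eq: "codeX n x = U \<inter> {w. \<forall>c\<in>?C. phi c w = 0}"
    by (auto simp: codeX_def U_def phi_def)
  define I where "I = ?C - {chk 0 0}"
  have c00: "chk 0 0 \<in> ?C" using chk_in_C n0 by simp
  have cardI: "card I = card ?C - 1" using c00 finite_C by (simp add: I_def)
  have codeI: "U \<inter> {w. \<forall>c\<in>I. phi c w = 0} = codeX n x"
  proof
    show "codeX n x \<subseteq> U \<inter> {w. \<forall>c\<in>I. phi c w = 0}" unfolding code_eq I_def by blast
    show "U \<inter> {w. \<forall>c\<in>I. phi c w = 0} \<subseteq> codeX n x"
    proof
      fix w assume w: "w \<in> U \<inter> {w. \<forall>c\<in>I. phi c w = 0}"
      let ?F = "\<lambda>a b. gg n x a b * phi (chk a b) w"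
      have G: "(\<Sum>a<n. \<Sum>b<n. ?F a b) = 0"
        unfolding phi_def using G2[OF n2 lab ch gauge(2)[OF n2 lab cyc] gauge(3)[OF n2 lab cyc]] .
      have "(\<Sum>a<n. \<Sum>b<n. ?F a b) = (\<Sum>(a,b)\<in>{..<n}\<times>{..<n}. ?F a b)"
        by (rule sum.cartesian_product)
      also have "\<dots> = (\<Sum>(a,b)\<in>{(0,0)}. ?F a b)"
      proof (rule sum.mono_neutral_right)
        show "finite ({..<n} \<times> {..<n})" by simp
        show "{(0::nat, 0::nat)} \<subseteq> {..<n} \<times> {..<n}" using n0 by simp
        show "\<forall>p\<in>{..<n} \<times> {..<n} - {(0, 0)}. (case p of (a, b) \<Rightarrow> ?F a b) = 0"
        proof
          fix p assume p: "p \<in> {..<n} \<times> {..<n} - {(0, 0)}"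
          obtain a b where ab: "p = (a,b)" by (cases p)
          have "chk a b \<in> I" using p ab chk_in_C by (auto simp: I_def chk_inj)
          then show "(case p of (a, b) \<Rightarrow> ?F a b) = 0" using w ab by simp
        qed
      qed
      also have "\<dots> = ?F 0 0" by simp
      finally have "?F 0 0 = 0" using G by simp
      then have p0: "phi (chk 0 0) w = 0" using gauge(1)[OF n2 lab cyc, of 0 0] n0 by simp
      have "\<forall>c\<in>?C. phi c w = 0" using w p0 by (auto simp: I_def)
      then show "w \<in> codeX n x" using w code_eq by blast
    qed
  qed
  have "fv.dim U \<le> fv.dim (U \<inter> {w. \<forall>c\<in>I. phi c w = 0}) + card I"
    by (rule hyper_iter[OF _ subU USp finW]) (auto simp: I_def finite_C phi_add phi_scl)
  then have low1: "fv.dim U \<le> fv.dim (codeX n x) + card I" using codeI by simp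
  have "card ?W \<le> fv.dim U"
    by (rule indep_card_le_dim[OF delta_indep _ USp finW]) (auto simp: U_def delta_def)
  moreover have "card ?W = card ?V" by (rule card_image[OF delta_inj])
  ultimately have "card ?V \<le> fv.dim U" by simp
  then have low: "n * n + n * n \<le> fv.dim (codeX n x) + (n * n - 1)"
    using low1 card_V[of n] card_C[of n] cardI by linarith
  define T where "T = (\<lambda>a. hv a (n-1)) ` {..<n} \<union> (\<lambda>(a,b). vv n a b) ` ({..<n} \<times> {1..<n})
      \<union> {vv n (n-1) 0}"
  have finT: "finite T" by (simp add: T_def)
  have cardT: "card T \<le> n * n + 1"
  proof -
    have "card T \<le> card ((\<lambda>a. hv a (n-1)) ` {..<n}) + card ((\<lambda>(a,b). vv n a b) ` ({..<n} \<times> {1..<n}))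
        + card {vv n (n-1) 0}"
      unfolding T_def by (meson card_Un_le add_right_mono order_trans)
    also have "\<dots> \<le> n + n * (n - 1) + 1"
      using card_image_le[of "{..<n}" "\<lambda>a. hv a (n-1)"]
        card_image_le[of "{..<n} \<times> {1..<n}" "\<lambda>(a,b). vv n a b"]
      by (simp add: card_cartesian_product)
    also have "n + n * (n - 1) = n * n" using n0 by (cases n) auto
    finally show ?thesis by simp
  qed
  have subcode: "fv.subspace (codeX n x)"
    unfolding code_eq
    by (rule fv.subspace_inter[OF subU]) (auto simp: fv.subspace_def phi_add phi_scl phi0)
  have "fv.dim (codeX n x) \<le> fv.dim (codeX n x \<inter> {w. \<forall>t\<in>T. w t = 0}) + card T"
    by (rule hyper_iter[OF finT subcode _ finW]) (use USp code_eq in auto)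
  moreover have "fv.dim (codeX n x \<inter> {w. \<forall>t\<in>T. w t = 0}) = 0"
  proof (rule dim_zero, rule subsetI)
    fix w assume w: "w \<in> codeX n x \<inter> {w. \<forall>t\<in>T. w t = 0}"
    have memT: "vv n a b \<in> T" if "a < n" "1 \<le> b" "b < n" for a b
      unfolding T_def
      by (rule UnI1, rule UnI2, rule image_eqI[where x="(a,b)"]) (use that in auto)
    have wT: "\<And>t. t \<in> T \<Longrightarrow> w t = 0" using w by blast
    have m1: "\<And>a. a < n \<Longrightarrow> hv a (n-1) \<in> T" by (auto simp: T_def)
    have m3: "vv n (n-1) 0 \<in> T" by (simp add: T_def)
    have "w = 0"
    proof (rule G1[OF n2 lab])
      show "w \<in> codeX n x" using w by blast
      show "w (hv a (n-1)) = 0" if "a < n" for a using wT m1 that by blast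
      show "w (vv n a b) = 0" if "a < n" "1 \<le> b" "b < n" for a b using wT memT that by blast
      show "w (vv n (n-1) 0) = 0" using wT m3 by blast
    qed
    then show "w \<in> {0}" by simp
  qed
  ultimately have up: "fv.dim (codeX n x) \<le> n * n + 1" using cardT by simp
  have "fv.dim (codeX n x) = n * n + 1" using low up n0 by (cases "n * n") auto
  then show ?thesis by (simp add: fdim_eq power2_eq_square)
qed

end
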